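(* Let $\tau$ be an untwisted skew product with base shift a transitive subshift of finite type and group factor $\mathbb Z^d$. (b) If $0\in\mathrm{rot}(\tau)$, then $\mathrm{rot}(\tau)$ is $d$-dimensional if and only if $\langle D(\tau)\rangle$ is a rank-$d$ subgroup of $\mathbb Z^d$. (c) If $\tau$ has the ftp and $0\in\mathrm{rot}(\tau)$, then $\mathrm{rot}(\tau)$ is $d$-dimensional.
   Context: Subshift of finite type $(\Sigma,\sigma)$: finite state set $S$, $\{0,1\}$-matrix $C$, $\Sigma=\{s\in S^{\mathbb Z}:C_{s_is_{i+1}}=1\ \forall i\}$, $\sigma$ the left shift; transitive means for any states $a,b$ there is an allowed finite word from $a$ to $b$. Untwisted skew product: $\tau(s,n)=(\sigma s,n+h(s))$ on $\Sigma\times\mathbb Z^d$, $h$ depending only on $(s_0,s_1)$. $h(s,n)=\sum_{i=0}^{n-1}h(\sigma^is)$; $\mathrm{rot}(s)=\lim h(s,n)/n$ when it exists; $\mathrm{rot}(\tau)\subset\mathbb R^d$ the set of all rotation vectors (it is a convex polytope, the convex hull of rotation vectors of finitely many periodic points). Dimension means dimension of the convex set. $D(\tau)=\{h(p,n):n>0,\sigma^np=p\}$; $\langle X\rangle$ the generated subgroup. ftp: $\tau_\Gamma$ (induced map on $\Sigma\times\mathbb Z^d/\Gamma$) is transitive for every finite-index subgroup $\Gamma$. *)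

theory Defs
  imports "HOL-Analysis.Analysis"
begin

text \<open>States: the finite type 'a. Transition matrix: C :: 'a => 'a => bool.
  Group factor Z^d is int^'n with d = CARD('n).\<close>

definition sft :: "('a \<Rightarrow> 'a \<Rightarrow> bool) \<Rightarrow> (int \<Rightarrow> 'a) set" where
  "sft C = {s. \<forall>i. C (s i) (s (i + 1))}"

definition shift :: "(int \<Rightarrow> 'a) \<Rightarrow> (int \<Rightarrow> 'a)" where
  "shift s = (\<lambda>i. s (i + 1))"

definition allowed_path :: "('a \<Rightarrow> 'a \<Rightarrow> bool) \<Rightarrow> 'a \<Rightarrow> 'a \<Rightarrow> bool" where
  "allowed_path C a b = (\<exists>n::nat. \<exists>w::nat \<Rightarrow> 'a. n > 0 \<and> w 0 = a \<and> w n = b \<and>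
      (\<forall>i<n. C (w i) (w (Suc i))))"

definition transitive_sft :: "('a::finite \<Rightarrow> 'a \<Rightarrow> bool) \<Rightarrow> bool" where
  "transitive_sft C = (\<forall>a b. allowed_path C a b)"

text \<open>Cocycle h(s,n) = sum_{i<n} h(sigma^i s), h depending on (s_0,s_1).\<close>
definition hsum :: "('a \<Rightarrow> 'a \<Rightarrow> int^'n) \<Rightarrow> (int \<Rightarrow> 'a) \<Rightarrow> nat \<Rightarrow> int^'n" where
  "hsum h s n = (\<Sum>i<n. h (s (int i)) (s (int i + 1)))"

definition vec_real :: "int^'n \<Rightarrow> real^'n" where
  "vec_real x = (\<chi> j. real_of_int (x $ j))"

definition rot_set :: "('a \<Rightarrow> 'a \<Rightarrow> bool) \<Rightarrow> ('a \<Rightarrow> 'a \<Rightarrow> int^'n) \<Rightarrow> (real^'n) set" where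
  "rot_set C h = {v. \<exists>s\<in>sft C.
      ((\<lambda>n. (1 / real n) *\<^sub>R vec_real (hsum h s n)) \<longlongrightarrow> v) sequentially}"

definition Dset :: "('a \<Rightarrow> 'a \<Rightarrow> bool) \<Rightarrow> ('a \<Rightarrow> 'a \<Rightarrow> int^'n) \<Rightarrow> (int^'n) set" where
  "Dset C h = {hsum h p n | p n. p \<in> sft C \<and> n > 0 \<and> (shift ^^ n) p = p}"

definition is_zsubgroup :: "(int^'n) set \<Rightarrow> bool" where
  "is_zsubgroup G = (0 \<in> G \<and> (\<forall>x\<in>G. \<forall>y\<in>G. x - y \<in> G))"

definition gen_subgroup :: "(int^'n) set \<Rightarrow> (int^'n) set" where
  "gen_subgroup X = \<Inter>{G. is_zsubgroup G \<and> X \<subseteq> G}"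

definition finite_index :: "(int^'n) set \<Rightarrow> bool" where
  "finite_index G = (\<exists>F. finite F \<and> (\<forall>x. \<exists>f\<in>F. x - f \<in> G))"

definition int_lin_indep :: "(int^'n) set \<Rightarrow> bool" where
  "int_lin_indep V = (finite V \<and>
     (\<forall>c :: int^'n \<Rightarrow> int. (\<Sum>v\<in>V. c v *s v) = 0 \<longrightarrow> (\<forall>v\<in>V. c v = 0)))"

definition zrank :: "(int^'n) set \<Rightarrow> nat" where
  "zrank G = (GREATEST k. \<exists>V. V \<subseteq> G \<and> int_lin_indep V \<and> card V = k)"

text \<open>Product topology on the shift space: relatively open subsets of Sigma.\<close>
definition sft_open :: "('a \<Rightarrow> 'a \<Rightarrow> bool) \<Rightarrow> (int \<Rightarrow> 'a) set \<Rightarrow> bool" where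
  "sft_open C U = (U \<subseteq> sft C \<and>
     (\<forall>s\<in>U. \<exists>k::nat. {t \<in> sft C. \<forall>i. \<bar>i\<bar> \<le> int k \<longrightarrow> t i = s i} \<subseteq> U))"

text \<open>Topological transitivity of tau_Gamma on Sigma x (Z^d/Gamma): for nonempty open
  U x {a+Gamma}, V x {b+Gamma} (these form a basis) some positive iterate meets.\<close>
definition induced_transitive ::
  "('a \<Rightarrow> 'a \<Rightarrow> bool) \<Rightarrow> ('a \<Rightarrow> 'a \<Rightarrow> int^'n) \<Rightarrow> (int^'n) set \<Rightarrow> bool" where
  "induced_transitive C h \<Gamma> = (\<forall>U V a b. sft_open C U \<and> U \<noteq> {} \<and> sft_open C V \<and> V \<noteq> {} \<longrightarrow>
      (\<exists>n>0. \<exists>s\<in>U. (shift ^^ n) s \<in> V \<and> a + hsum h s n - b \<in> \<Gamma>))"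

definition ftp :: "('a \<Rightarrow> 'a \<Rightarrow> bool) \<Rightarrow> ('a \<Rightarrow> 'a \<Rightarrow> int^'n) \<Rightarrow> bool" where
  "ftp C h = (\<forall>\<Gamma>. is_zsubgroup \<Gamma> \<and> finite_index \<Gamma> \<longrightarrow> induced_transitive C h \<Gamma>)"

end

theory Submission
  imports Defs
begin


definition pathC :: "('a \<Rightarrow> 'a \<Rightarrow> bool) \<Rightarrow> (nat \<Rightarrow> 'a) \<Rightarrow> nat \<Rightarrow> bool" where
  "pathC C w n = (\<forall>i<n. C (w i) (w (Suc i)))"

definition pval :: "('a \<Rightarrow> 'a \<Rightarrow> int^'n) \<Rightarrow> (nat \<Rightarrow> 'a) \<Rightarrow> nat \<Rightarrow> int^'n" where
  "pval h w n = (\<Sum>i<n. h (w i) (w (Suc i)))"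

lemma hsum_pval: "hsum h s n = pval h (\<lambda>i. s (int i)) n"
  by (simp add: hsum_def pval_def add.commute)

lemma sft_path: "s \<in> sft C \<Longrightarrow> pathC C (\<lambda>i. s (int i)) n"
  unfolding sft_def pathC_def
proof (safe)
  fix i assume "\<forall>i. C (s i) (s (i + 1))"
  then show "C (s (int i)) (s (int (Suc i)))" by (metis of_nat_Suc add.commute)
qed

lemma shift_pow: "(shift ^^ k) s = (\<lambda>i. s (i + int k))"
  by (induction k) (auto simp: shift_def ac_simps)

lemma sum_lessThan_add: "(\<Sum>i<a+b. f i) = (\<Sum>i<a. f i) + (\<Sum>i<b. f (a+i))" for f :: "nat \<Rightarrow> 'b::comm_monoid_add"
  by (induction b) (simp_all add: add.assoc)

lemma pval_add: "pval h w (a + b) = pval h w a + pval h (\<lambda>k. w (a+k)) b"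
  unfolding pval_def by (subst sum_lessThan_add) simp

lemma zsub_gen: "is_zsubgroup (gen_subgroup X)"
  unfolding is_zsubgroup_def gen_subgroup_def by auto

lemma gen_sub_le: "is_zsubgroup G \<Longrightarrow> X \<subseteq> G \<Longrightarrow> gen_subgroup X \<subseteq> G"
  unfolding gen_subgroup_def by auto

lemma gen_sub_inc: "X \<subseteq> gen_subgroup X"
  unfolding gen_subgroup_def by auto

lemma zsub_add: "is_zsubgroup G \<Longrightarrow> x \<in> G \<Longrightarrow> y \<in> G \<Longrightarrow> x + y \<in> G"
  unfolding is_zsubgroup_def by (metis diff_0 diff_minus_eq_add)

lemma cycle_in_D:
  assumes path: "pathC C u k" and k: "k > 0" and cyc: "u k = u 0"
  shows "pval h u k \<in> Dset C h"
proof -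
  define p where "p = (\<lambda>t::int. u (nat (t mod int k)))"
  have step: "p (t + 1) = u (Suc (nat (t mod int k)))" for t
  proof -
    have r0: "0 \<le> t mod int k" "t mod int k < int k" using k by auto
    have e: "(t + 1) mod int k = (t mod int k + 1) mod int k" by (simp add: mod_add_left_eq)
    show ?thesis
    proof (cases "t mod int k + 1 < int k")
      case True
      then have "(t + 1) mod int k = t mod int k + 1" using e r0 by simp
      then show ?thesis unfolding p_def using r0 by (simp add: nat_add_distrib)
    next
      case False
      then have "t mod int k + 1 = int k" using r0 by simp
      then have "(t + 1) mod int k = 0" using e by auto
      moreover have "Suc (nat (t mod int k)) = k" using \<open>t mod int k + 1 = int k\<close> r0 by (metis Suc_nat_eq_nat_zadd1 nat_int add.commute)
      ultimately show ?thesis unfolding p_def using cyc by simp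
    qed
  qed
  have psft: "p \<in> sft C"
    unfolding sft_def
  proof (safe)
    fix t
    have "nat (t mod int k) < k" using k by (simp add: nat_less_iff)
    then show "C (p t) (p (t + 1))" using path step[of t] unfolding pathC_def p_def by simp
  qed
  have per: "(shift ^^ k) p = p"
    unfolding shift_pow p_def by simp
  have "hsum h p k = pval h u k"
    unfolding hsum_def pval_def
  proof (rule sum.cong[OF refl])
    fix i assume "i \<in> {..<k}"
    then have "p (int i) = u i" unfolding p_def by simp
    moreover have "p (int i + 1) = u (Suc i)" using step[of "int i"] \<open>i \<in> {..<k}\<close> by simp
    ultimately show "h (p (int i)) (p (int i + 1)) = h (u i) (u (Suc i))" by simp
  qed
  then show ?thesis unfolding Dset_def using psft per k by force
qed

lemma decomp:
  fixes C :: "'a::finite \<Rightarrow> 'a \<Rightarrow> bool"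
  shows "pathC C w n \<Longrightarrow> \<exists>l\<in>gen_subgroup (Dset C h). \<exists>m w'. m < CARD('a) \<and> pathC C w' m \<and> pval h w n = l + pval h w' m"
proof (induction n arbitrary: w rule: less_induct)
  case (less n)
  show ?case
  proof (cases "n < CARD('a)")
    case True
    have "0 \<in> gen_subgroup (Dset C h)" using zsub_gen unfolding is_zsubgroup_def by blast
    then show ?thesis using less.prems True by (intro bexI[of _ 0]) auto
  next
    case False
    have "\<not> inj_on w {..n}"
    proof
      assume "inj_on w {..n}"
      then have "card (w ` {..n}) = Suc n" by (simp add: card_image)
      moreover have "card (w ` {..n}) \<le> CARD('a)" by (rule card_mono) auto
      ultimately show False using False by simp
    qed
    then obtain i j where ij: "i < j" "j \<le> n" "w i = w j"
      unfolding inj_on_def by (metis atMost_iff linorder_neqE_nat)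
    define \<delta> where "\<delta> = j - i"
    define r where "r = n - j"
    have n_eq: "n = i + \<delta> + r" "j = i + \<delta>" using ij unfolding \<delta>_def r_def by auto
    have dpos: "\<delta> > 0" using ij unfolding \<delta>_def by auto
    define w' where "w' = (\<lambda>k. if k \<le> i then w k else w (k + \<delta>))"
    have cyc: "pval h (\<lambda>k. w (i+k)) \<delta> \<in> Dset C h"
    proof (rule cycle_in_D[OF _ dpos])
      show "pathC C (\<lambda>k. w (i + k)) \<delta>" using less.prems unfolding pathC_def n_eq by auto
      show "w (i + \<delta>) = w (i + 0)" using ij n_eq by simp
    qed
    have path': "pathC C w' (i + r)"
      unfolding pathC_def
    proof (intro allI impI)
      fix k assume k: "k < i + r"
      show "C (w' k) (w' (Suc k))"
      proof (cases "k < i")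
        case True
        then show ?thesis using less.prems n_eq unfolding pathC_def w'_def by auto
      next
        case False
        then have "w' k = w (k + \<delta>)" "w' (Suc k) = w (Suc (k + \<delta>))"
          unfolding w'_def using ij n_eq by auto
        moreover have "k + \<delta> < n" using k n_eq by auto
        ultimately show ?thesis using less.prems unfolding pathC_def by auto
      qed
    qed
    have v1: "pval h w n = pval h w i + pval h (\<lambda>k. w (i+k)) \<delta> + pval h (\<lambda>k. w (i+\<delta>+k)) r"
      unfolding n_eq(1) pval_add by (simp add: add.assoc)
    have v2: "pval h w' (i + r) = pval h w i + pval h (\<lambda>k. w (i+\<delta>+k)) r"
    proof -
      have "pval h w' i = pval h w i"
        unfolding pval_def by (rule sum.cong) (auto simp: w'_def)
      moreover have "pval h (\<lambda>k. w' (i+k)) r = pval h (\<lambda>k. w (i+\<delta>+k)) r"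
        unfolding pval_def
      proof (rule sum.cong[OF refl])
        fix k assume "k \<in> {..<r}"
        have "w' (i + k) = w (i + \<delta> + k)"
          using ij n_eq unfolding w'_def by (cases "k = 0") (auto simp: add.commute add.left_commute)
        moreover have "w' (i + Suc k) = w (i + \<delta> + Suc k)"
          unfolding w'_def by (simp add: ac_simps)
        ultimately show "h (w' (i + k)) (w' (i + Suc k)) = h (w (i + \<delta> + k)) (w (i + \<delta> + Suc k))"
          by simp
      qed
      ultimately show ?thesis by (simp add: pval_add)
    qed
    have "i + r < n" using n_eq dpos by simp
    from less.IH[OF this path'] obtain l m w'' where
      l: "l \<in> gen_subgroup (Dset C h)" "m < CARD('a)" "pathC C w'' m" "pval h w' (i + r) = l + pval h w'' m"
      by blast
    have "l + pval h (\<lambda>k. w (i+k)) \<delta> \<in> gen_subgroup (Dset C h)"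
      by (rule zsub_add[OF zsub_gen l(1)]) (use cyc gen_sub_inc in blast)
    moreover have "pval h w n = (l + pval h (\<lambda>k. w (i+k)) \<delta>) + pval h w'' m"
      using v1 v2 l(4) by (simp add: algebra_simps)
    ultimately show ?thesis using l by blast
  qed
qed



lemma vec_real_add: "vec_real (x + y) = vec_real x + vec_real y"
  by (simp add: vec_real_def vec_eq_iff)
lemma vec_real_diff: "vec_real (x - y) = vec_real x - vec_real y"
  by (simp add: vec_real_def vec_eq_iff)
lemma vec_real_zero[simp]: "vec_real 0 = 0"
  by (simp add: vec_real_def vec_eq_iff)
lemma vec_real_sum: "vec_real (sum f S) = (\<Sum>x\<in>S. vec_real (f x))"
  by (simp add: vec_real_def vec_eq_iff sum_component)
lemma vec_real_scale: "vec_real (c *s x) = real_of_int c *\<^sub>R vec_real x"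
  by (simp add: vec_real_def vec_eq_iff)
lemma inj_vec_real: "inj vec_real"
  by (auto simp: inj_def vec_real_def vec_eq_iff)

lemma hsum_shift_add: "hsum h s (m + k) = hsum h s m + hsum h ((shift^^m) s) k"
  unfolding hsum_def shift_pow by (subst sum_lessThan_add) (simp add: ac_simps)

lemma rot_periodic:
  assumes p: "p \<in> sft C" "n > 0" "(shift^^n) p = p"
  shows "(1 / real n) *\<^sub>R vec_real (hsum h p n) \<in> rot_set C h"
proof -
  define R where "R m = vec_real (hsum h p m)" for m
  have Radd: "R (n + k) = R n + R k" for k
    unfolding R_def hsum_shift_add p(3) by (simp add: vec_real_add)
  have Rq: "R (q*n + r) = real q *\<^sub>R R n + R r" for q r
  proof (induction q)
    case 0 then show ?case by simp
  next
    case (Suc q)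
    have "R (Suc q * n + r) = R (n + (q*n + r))" by (simp add: add.assoc)
    also have "\<dots> = R n + R (q*n + r)" by (rule Radd)
    finally have "R (Suc q * n + r) = R n + R (q*n + r)" .
    also have "\<dots> = real (Suc q) *\<^sub>R R n + R r" using Suc by (simp add: algebra_simps)
    finally show ?case .
  qed
  define v where "v = (1 / real n) *\<^sub>R R n"
  define B where "B = norm (R n) + (\<Sum>r<n. norm (R r))"
  have bound: "norm ((1 / real m) *\<^sub>R R m - v) \<le> B * (1 / real m)" if m: "m > 0" for m
  proof -
    define q where "q = m div n"
    define r where "r = m mod n"
    have mq: "m = q * n + r" unfolding q_def r_def by simp
    have rn: "r < n" unfolding r_def using p(2) by simp
    have mqr: "real m = real q * real n + real r" using mq by (metis of_nat_add of_nat_mult)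
    have coef: "real q / real m - 1 / real n = - (real r / (real m * real n))"
      using m p(2) mqr by (simp add: field_simps)
    have "(1 / real m) *\<^sub>R R m - v = (real q / real m - 1 / real n) *\<^sub>R R n + (1 / real m) *\<^sub>R R r"
      unfolding v_def by (subst mq, subst Rq) (simp add: algebra_simps)
    also have "\<dots> = (- (real r / (real m * real n))) *\<^sub>R R n + (1 / real m) *\<^sub>R R r"
      unfolding coef ..
    finally have eq: "(1 / real m) *\<^sub>R R m - v = (- (real r / (real m * real n))) *\<^sub>R R n + (1 / real m) *\<^sub>R R r" .
    have c1: "real r / (real m * real n) \<le> 1 / real m"
      using rn m p(2) by (simp add: field_simps)
    have c2: "norm (R r) \<le> (\<Sum>r<n. norm (R r))"
      by (rule member_le_sum) (use rn in auto)
    have "norm ((1 / real m) *\<^sub>R R m - v) \<le> (real r / (real m * real n)) * norm (R n) + (1 / real m) * norm (R r)"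
      unfolding eq by (rule order_trans[OF norm_triangle_ineq]) simp
    also have "\<dots> \<le> (1 / real m) * norm (R n) + (1 / real m) * (\<Sum>r<n. norm (R r))"
      by (intro add_mono mult_right_mono mult_left_mono c1 c2) auto
    also have "\<dots> = B * (1 / real m)" unfolding B_def by (simp add: algebra_simps)
    finally show ?thesis .
  qed
  have lim0: "((\<lambda>m. B * (1 / real m)) \<longlongrightarrow> 0) sequentially"
    using tendsto_mult[OF tendsto_const lim_inverse_n', of B] by simp
  have "((\<lambda>m. (1 / real m) *\<^sub>R R m - v) \<longlongrightarrow> 0) sequentially"
  proof (rule Lim_null_comparison[OF _ lim0])
    show "\<forall>\<^sub>F m in sequentially. norm ((1 / real m) *\<^sub>R R m - v) \<le> B * (1 / real m)"
      using eventually_gt_at_top[of 0] by eventually_elim (rule bound)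
  qed
  then have "((\<lambda>m. (1 / real m) *\<^sub>R R m) \<longlongrightarrow> v) sequentially"
    by (rule LIM_zero_cancel)
  then show ?thesis unfolding rot_set_def R_def v_def using p(1) by auto
qed

definition Hm :: "('a::finite \<Rightarrow> 'a \<Rightarrow> int^'n) \<Rightarrow> real" where
  "Hm h = (\<Sum>p\<in>UNIV. norm (vec_real (h (fst p) (snd p))))"

lemma Hm_ge: "norm (vec_real (h a b)) \<le> Hm h"
  unfolding Hm_def using member_le_sum[of "(a,b)" UNIV "\<lambda>p. norm (vec_real (h (fst p) (snd p)))"] by simp

lemma pval_bound: "norm (vec_real (pval h w m)) \<le> real m * Hm h"
proof -
  have "norm (vec_real (pval h w m)) \<le> (\<Sum>i<m. norm (vec_real (h (w i) (w (Suc i)))))"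
    unfolding pval_def vec_real_sum by (rule norm_sum)
  also have "\<dots> \<le> (\<Sum>i<m. Hm h)" by (rule sum_mono) (rule Hm_ge)
  finally show ?thesis by simp
qed

lemma gen_in_span: "l \<in> gen_subgroup X \<Longrightarrow> vec_real l \<in> span (vec_real ` X)"
proof -
  have "gen_subgroup X \<subseteq> {x. vec_real x \<in> span (vec_real ` X)}"
  proof (rule gen_sub_le)
    show "is_zsubgroup {x. vec_real x \<in> span (vec_real ` X)}"
      unfolding is_zsubgroup_def by (auto simp: vec_real_diff span_diff span_zero)
    show "X \<subseteq> {x. vec_real x \<in> span (vec_real ` X)}" by (auto intro: span_base)
  qed
  then show "l \<in> gen_subgroup X \<Longrightarrow> vec_real l \<in> span (vec_real ` X)" by blast
qed

lemma rot_sub_span: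
  fixes C :: "'a::finite \<Rightarrow> 'a \<Rightarrow> bool"
  shows "rot_set C h \<subseteq> span (vec_real ` Dset C h)"
proof
  fix v assume "v \<in> rot_set C h"
  then obtain s where s: "s \<in> sft C" and lim: "((\<lambda>n. (1 / real n) *\<^sub>R vec_real (hsum h s n)) \<longlongrightarrow> v) sequentially"
    unfolding rot_set_def by blast
  define W where "W = span (vec_real ` Dset C h)"
  define K where "K = real CARD('a) * Hm h"
  have Hm0: "0 \<le> Hm h" unfolding Hm_def by (intro sum_nonneg) auto
  have "\<forall>m. \<exists>y. y \<in> W \<and> norm (vec_real (hsum h s m) - y) \<le> K"
  proof
    fix m
    obtain l k w' where l: "l \<in> gen_subgroup (Dset C h)" "k < CARD('a)" "pval h (\<lambda>i. s (int i)) m = l + pval h w' k"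
      using decomp[OF sft_path[OF s, of m], of h] by blast
    have "norm (vec_real (hsum h s m) - vec_real l) = norm (vec_real (pval h w' k))"
      unfolding hsum_pval l(3) vec_real_add by simp
    also have "\<dots> \<le> real k * Hm h" by (rule pval_bound)
    also have "\<dots> \<le> K" unfolding K_def using l(2) Hm0 by (intro mult_right_mono) auto
    finally show "\<exists>y. y \<in> W \<and> norm (vec_real (hsum h s m) - y) \<le> K"
      using gen_in_span[OF l(1)] unfolding W_def by blast
  qed
  then obtain y where y: "\<And>m. y m \<in> W" "\<And>m. norm (vec_real (hsum h s m) - y m) \<le> K"
    by metis
  have lim0: "((\<lambda>m. K * (1 / real m)) \<longlongrightarrow> 0) sequentially"
    using tendsto_mult[OF tendsto_const lim_inverse_n', of K] by simp
  have d0: "((\<lambda>m. (1 / real m) *\<^sub>R vec_real (hsum h s m) - (1 / real m) *\<^sub>R y m) \<longlongrightarrow> 0) sequentially"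
  proof (rule Lim_null_comparison[OF _ lim0], rule always_eventually, rule allI)
    fix m
    have "norm ((1 / real m) *\<^sub>R vec_real (hsum h s m) - (1 / real m) *\<^sub>R y m)
        = (1 / real m) * norm (vec_real (hsum h s m) - y m)"
      by (simp flip: scaleR_diff_right)
    also have "\<dots> \<le> (1 / real m) * K" by (intro mult_left_mono y(2)) auto
    finally show "norm ((1 / real m) *\<^sub>R vec_real (hsum h s m) - (1 / real m) *\<^sub>R y m) \<le> K * (1 / real m)"
      by (simp add: mult.commute)
  qed
  have "((\<lambda>m. (1 / real m) *\<^sub>R y m) \<longlongrightarrow> v - 0) sequentially"
    using tendsto_diff[OF lim d0] by simp
  then have "((\<lambda>m. (1 / real m) *\<^sub>R y m) \<longlongrightarrow> v) sequentially" by simp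
  moreover have "\<forall>\<^sub>F m in sequentially. (1 / real m) *\<^sub>R y m \<in> W"
    using y(1) unfolding W_def by (simp add: span_scale)
  ultimately show "v \<in> span (vec_real ` Dset C h)"
    using Lim_in_closed_set[OF closed_span] unfolding W_def by (metis trivial_limit_sequentially)
qed



definition ri :: "int^'n \<Rightarrow> rat^'n" where "ri x = (\<chi> j. of_int (x$j))"
definition rr :: "rat^'n \<Rightarrow> real^'n" where "rr x = (\<chi> j. of_rat (x$j))"

lemma rr_ri: "rr (ri x) = vec_real x"
  by (simp add: rr_def ri_def vec_real_def vec_eq_iff)

lemma rr_sum_scale: "rr (\<Sum>a\<in>t. r a *s a) = (\<Sum>a\<in>t. of_rat (r a) *\<^sub>R rr a)"
  by (simp add: rr_def vec_eq_iff sum_component of_rat_sum of_rat_mult)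

lemma ri_sum_scale: "ri (\<Sum>v\<in>V. c v *s v) = (\<Sum>v\<in>V. of_int (c v) *s ri v)"
  by (simp add: ri_def vec_eq_iff sum_component)

lemma inj_ri: "inj ri"
  by (auto simp: inj_def ri_def vec_eq_iff)

lemma transport:
  fixes X :: "(int^'n) set"
  assumes "vec.span (ri ` X) = UNIV"
  shows "span (vec_real ` X) = UNIV"
proof -
  have ax: "axis j (1::real) \<in> span (vec_real ` X)" for j
  proof -
    have "axis j (1::rat) \<in> vec.span (ri ` X)" using assms by simp
    then obtain t r where t: "finite t" "t \<subseteq> ri ` X" "axis j 1 = (\<Sum>a\<in>t. r a *s a)"
      unfolding vec.span_explicit by blast
    have "axis j (1::real) = rr (axis j 1)" by (simp add: rr_def vec_eq_iff axis_def)
    also have "\<dots> = (\<Sum>a\<in>t. of_rat (r a) *\<^sub>R rr a)" using t(3) by (simp add: rr_sum_scale)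
    also have "\<dots> \<in> span (vec_real ` X)"
    proof (rule span_sum, rule span_scale, rule span_base)
      fix a assume "a \<in> t" then obtain x where "x\<in>X" "a = ri x" using t(2) by blast
      then show "rr a \<in> vec_real ` X" by (simp add: rr_ri)
    qed
    finally show ?thesis .
  qed
  have "Basis \<subseteq> span (vec_real ` X)" using ax by (auto simp: Basis_vec_def)
  then have "span Basis \<subseteq> span (vec_real ` X)" by (metis span_mono span_span)
  then show ?thesis by (simp add: span_Basis top.extremum_uniqueI)
qed

lemma common_denom: "finite A \<Longrightarrow> \<exists>N::int. N > 0 \<and> (\<forall>q\<in>A. (of_int N * (q::rat)) \<in> \<int>)"
proof (induction A rule: finite_induct)
  case empty show ?case by (intro exI[of _ 1]) simp
next
  case (insert q A)
  then obtain N where N: "N>0" "\<forall>q\<in>A. of_int N * q \<in> \<int>" by blast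
  obtain a b where ab: "quotient_of q = (a,b)" by (cases "quotient_of q")
  have b: "b > 0" using quotient_of_denom_pos[OF ab] .
  have q: "q = of_int a / of_int b" using quotient_of_div[OF ab] .
  show ?case
  proof (intro exI[of _ "N*b"] conjI ballI)
    show "N*b > 0" using N b by simp
    fix q' assume "q' \<in> insert q A"
    then show "of_int (N*b) * q' \<in> \<int>"
    proof
      assume "q' = q"
      have e: "rat_of_int b * q = rat_of_int a" using b q by simp
      have "of_int (N*b) * q' = of_int N * (rat_of_int b * q)" using \<open>q' = q\<close> by (simp only: of_int_mult mult.assoc)
      also have "\<dots> = of_int (N*a)" by (simp only: e of_int_mult)
      finally show ?thesis by (simp only:) (rule Ints_of_int)
    next
      assume "q' \<in> A" then have "of_int N * q' \<in> \<int>" using N by blast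
      then have "of_int b * (of_int N * q') \<in> \<int>" by (rule Ints_mult[OF Ints_of_int])
      then show ?thesis by (simp add: ac_simps)
    qed
  qed
qed

lemma zindep_rat:
  fixes V :: "(int^'n) set"
  assumes "int_lin_indep V"
  shows "vec.independent (ri ` V)"
proof -
  have fin: "finite V" using assms unfolding int_lin_indep_def by simp
  show ?thesis
  unfolding vec.independent_explicit
  proof (intro conjI allI impI ballI)
    show "finite (ri ` V)" using fin by simp
    fix u w assume sum0: "(\<Sum>v\<in>ri ` V. u v *s v) = 0" and w: "w \<in> ri ` V"
    have sum0': "(\<Sum>v\<in>V. u (ri v) *s ri v) = 0"
      using sum0 by (simp add: sum.reindex[OF inj_on_subset[OF inj_ri subset_UNIV]])
    obtain N where N: "N > 0" "\<forall>q\<in>(\<lambda>v. u (ri v)) ` V. of_int N * q \<in> \<int>"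
      using common_denom[of "(\<lambda>v. u (ri v)) ` V"] fin by auto
    define c where "c v = (SOME z. of_int z = of_int N * u (ri v))" for v
    have c: "of_int (c v) = of_int N * u (ri v)" if "v \<in> V" for v
    proof -
      have "of_int N * u (ri v) \<in> \<int>" using N that by blast
      then obtain z where "of_int N * u (ri v) = of_int z" by (elim Ints_cases)
      then show ?thesis unfolding c_def by (metis (mono_tags) someI_ex)
    qed
    have "ri (\<Sum>v\<in>V. c v *s v) = (\<Sum>v\<in>V. of_int (c v) *s ri v)" by (rule ri_sum_scale)
    also have "\<dots> = (\<Sum>v\<in>V. of_int N *s (u (ri v) *s ri v))" by (rule sum.cong) (simp_all add: c)
    also have "\<dots> = of_int N *s (\<Sum>v\<in>V. u (ri v) *s ri v)" by (simp add: vec.scale_sum_right)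
    also have "\<dots> = 0" using sum0' by simp
    finally have rs0: "ri (\<Sum>v\<in>V. c v *s v) = 0" .
    have ri0: "y = 0" if "ri y = 0" for y :: "int^'n" using that by (simp add: ri_def vec_eq_iff)
    from ri0[OF rs0] have "(\<Sum>v\<in>V. c v *s v) = 0" .
    then have cz: "\<forall>v\<in>V. c v = 0" using assms unfolding int_lin_indep_def by blast
    obtain v where v: "v \<in> V" "w = ri v" using w by blast
    have "of_int N * u (ri v) = 0" using c[OF v(1)] cz v(1) by simp
    then show "u w = 0" using N v by simp
  qed
qed

lemma zindep_card:
  fixes V :: "(int^'n) set"
  assumes "int_lin_indep V" shows "card V \<le> CARD('n)"
proof -
  have "card (ri ` V) \<le> vec.dim (UNIV :: (rat^'n) set)"
    by (rule vec.independent_card_le_dim[OF subset_UNIV zindep_rat[OF assms]])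
  then show ?thesis using vec_dim_card card_image[OF inj_on_subset[OF inj_ri subset_UNIV]] by metis
qed

lemma zrank_eq:
  fixes G :: "(int^'n) set"
  shows "zrank G = CARD('n) \<longleftrightarrow> (\<exists>V. V \<subseteq> G \<and> int_lin_indep V \<and> card V = CARD('n))"
proof -
  let ?P = "\<lambda>k. \<exists>V. V \<subseteq> G \<and> int_lin_indep V \<and> card V = k"
  have bnd: "\<forall>y. ?P y \<longrightarrow> y \<le> CARD('n)" using zindep_card by blast
  have p0: "?P 0" by (intro exI[of _ "{}"]) (simp add: int_lin_indep_def)
  show ?thesis
  proof
    assume "zrank G = CARD('n)"
    have "?P (Greatest ?P)" by (rule GreatestI_nat[of ?P 0 "CARD('n)", OF p0]) (use bnd in blast)
    moreover have "zrank G = Greatest ?P" unfolding zrank_def ..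
    ultimately show "?P CARD('n)" using \<open>zrank G = CARD('n)\<close> by simp
  next
    assume "?P CARD('n)" then show "zrank G = CARD('n)" unfolding zrank_def using bnd by (intro Greatest_equality) auto
  qed
qed



lemma span_iff_zrank:
  fixes D :: "(int^'n) set"
  shows "span (vec_real ` D) = UNIV \<longleftrightarrow> zrank (gen_subgroup D) = CARD('n)"
proof
  assume sp: "span (vec_real ` D) = UNIV"
  obtain B where B: "B \<subseteq> vec_real ` D" "independent B" "vec_real ` D \<subseteq> span B" "card B = dim (vec_real ` D)"
    by (rule basis_exists)
  have dimD: "dim (vec_real ` D) = CARD('n)" using sp dim_eq_full[of "vec_real ` D"] by simp
  define V where "V = D \<inter> vec_real -` B"
  have VB: "vec_real ` V = B" using B(1) unfolding V_def by auto
  have injV: "inj_on vec_real V" using inj_vec_real by (rule inj_on_subset) simp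
  have cardV: "card V = CARD('n)" using card_image[OF injV] VB B(4) dimD by simp
  have finB: "finite B" using B(2) by (rule finiteI_independent)
  have finV: "finite V" using finite_imageD[of vec_real V] VB finB injV by simp
  have "int_lin_indep V" unfolding int_lin_indep_def
  proof (intro conjI allI impI ballI)
    show "finite V" by (rule finV)
    fix c v assume s0: "(\<Sum>v\<in>V. c v *s v) = 0" and v: "v \<in> V"
    define c' where "c' b = real_of_int (c (inv vec_real b))" for b
    have "(\<Sum>b\<in>B. c' b *\<^sub>R b) = (\<Sum>v\<in>V. c' (vec_real v) *\<^sub>R vec_real v)"
      unfolding VB[symmetric] by (rule sum.reindex[OF injV, unfolded comp_def])
    also have "\<dots> = vec_real (\<Sum>v\<in>V. c v *s v)"
      by (simp add: vec_real_sum vec_real_scale c'_def inv_f_f[OF inj_vec_real])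
    also have "\<dots> = 0" using s0 by simp
    finally have "\<forall>b\<in>B. c' b = 0" using B(2) finB by (auto simp: independent_explicit)
    then have "c' (vec_real v) = 0" using v VB by blast
    then show "c v = 0" by (simp add: c'_def inv_f_f[OF inj_vec_real])
  qed
  moreover have "V \<subseteq> gen_subgroup D" using gen_sub_inc unfolding V_def by blast
  ultimately show "zrank (gen_subgroup D) = CARD('n)" using zrank_eq cardV by blast
next
  assume "zrank (gen_subgroup D) = CARD('n)"
  then obtain V where V: "V \<subseteq> gen_subgroup D" "int_lin_indep V" "card V = CARD('n)"
    using zrank_eq by blast
  have ind: "vec.independent (ri ` V)" by (rule zindep_rat[OF V(2)])
  have "card (ri ` V) = card V" by (rule card_image) (rule inj_on_subset[OF inj_ri subset_UNIV])
  then have c: "card (ri ` V) = CARD('n)" using V(3) by simp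
  have fin: "finite (ri ` V)" using V(2) unfolding int_lin_indep_def by simp
  have "vec.span (ri ` V) = UNIV"
  proof -
    have d: "vec.dim (UNIV::(rat^'n) set) = CARD('n)" by (rule vec_dim_card)
    have "UNIV \<subseteq> vec.span (ri ` V)"
      using vec.card_eq_dim[of "ri ` V" UNIV, OF subset_UNIV] ind c fin d by simp
    then show ?thesis by blast
  qed
  then have "span (vec_real ` V) = UNIV" by (rule transport)
  moreover have "vec_real ` V \<subseteq> span (vec_real ` D)" using V(1) gen_in_span by blast
  ultimately show "span (vec_real ` D) = UNIV" by (metis span_mono span_span top.extremum_uniqueI)
qed

lemma int_functional:
  fixes D :: "(int^'n) set"
  assumes "span (vec_real ` D) \<noteq> UNIV"
  shows "\<exists>a::int^'n. a \<noteq> 0 \<and> (\<forall>x\<in>D. (\<Sum>j\<in>UNIV. a$j * x$j) = 0)"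
proof -
  have nsp: "vec.span (ri ` D) \<noteq> UNIV" using assms transport by blast
  have "\<exists>k. axis k (1::rat) \<notin> vec.span (ri ` D)"
  proof (rule ccontr)
    assume "\<not> ?thesis"
    then have "cart_basis \<subseteq> vec.span (ri ` D)" by (auto simp: cart_basis_def)
    then have "vec.span cart_basis \<subseteq> vec.span (ri ` D)" by (rule vec.span_minimal) (rule vec.subspace_span)
    then show False using nsp span_cart_basis by auto
  qed
  then obtain k where k: "axis k (1::rat) \<notin> vec.span (ri ` D)" by blast
  obtain B where B: "B \<subseteq> vec.span (ri ` D)" "vec.independent B" "vec.span (ri ` D) \<subseteq> vec.span B"
    using vec.basis_exists[of "vec.span (ri ` D)"] by metis
  have spB: "vec.span B \<subseteq> vec.span (ri ` D)" using B(1) vec.span_minimal vec.subspace_span by blast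
  have eB: "axis k 1 \<notin> vec.span B" using k spB by blast
  have eBn: "axis k 1 \<notin> B" using eB vec.span_base by blast
  have ind: "vec.independent (insert (axis k 1) B)" by (rule vec.independent_insertI[OF eB B(2)])
  obtain g :: "rat^'n \<Rightarrow> rat^'n" where g: "Vector_Spaces.linear (*s) (*s) g"
      "\<forall>x\<in>insert (axis k 1) B. g x = (if x = axis k 1 then axis k 1 else 0)"
    using vec.linear_independent_extend[OF ind, of "\<lambda>x. if x = axis k 1 then axis k 1 else (0::rat^'n)"] by blast
  have gB: "vec.span B \<subseteq> {x. g x = 0}"
  proof (rule vec.span_minimal)
    show "B \<subseteq> {x. g x = 0}" using g(2) eBn by auto
    show "vec.subspace {x. g x = 0}" unfolding vec.subspace_def
      using vec.linear_0[OF g(1)] vec.linear_add[OF g(1)] vec.linear_scale[OF g(1)] by auto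
  qed
  define ar where "ar = (\<chi> j. (g (axis j 1))$k)"
  have gexp: "(g x)$k = (\<Sum>j\<in>UNIV. x$j * ar$j)" for x
  proof -
    have xe: "x = (\<Sum>j\<in>UNIV. x$j *s axis j 1)"
      by (simp add: vec_eq_iff sum_component axis_def if_distrib sum.delta sum.delta' cong: if_cong)
    have "g x = g (\<Sum>j\<in>UNIV. x$j *s axis j 1)" by (subst xe) (rule refl)
    also have "\<dots> = (\<Sum>j\<in>UNIV. g (x$j *s axis j 1))" by (rule vec.linear_sum[OF g(1)])
    also have "\<dots> = (\<Sum>j\<in>UNIV. x$j *s g (axis j 1))" by (simp add: vec.linear_scale[OF g(1)])
    finally show ?thesis by (simp add: sum_component ar_def)
  qed
  have ark: "ar$k = 1" using g(2) by (simp add: ar_def axis_def)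
  have arD: "(\<Sum>j\<in>UNIV. of_int (x$j) * ar$j) = 0" if "x \<in> D" for x
  proof -
    have "ri x \<in> vec.span B" using B(3) that vec.span_base by blast
    then have "g (ri x) = 0" using gB by blast
    then show ?thesis using gexp[of "ri x"] by (simp add: ri_def)
  qed
  obtain N where N: "N > 0" "\<forall>q\<in>range (\<lambda>j. ar$j). of_int N * q \<in> \<int>"
    using common_denom[of "range (\<lambda>j. ar$j)"] by auto
  define a :: "int^'n" where "a = (\<chi> j. (SOME z. of_int z = of_int N * ar$j))"
  have a: "of_int (a$j) = of_int N * ar$j" for j
  proof -
    have "of_int N * ar$j \<in> \<int>" using N by blast
    then obtain z where "of_int N * ar$j = of_int z" by (elim Ints_cases)
    then have "\<exists>z. (of_int z :: rat) = of_int N * ar$j" by metis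
    then show ?thesis unfolding a_def vec_lambda_beta by (rule someI_ex)
  qed
  have "a \<noteq> 0"
  proof
    assume "a = 0"
    then have "(of_int (a$k) :: rat) = 0" by simp
    then show False using a[of k] ark N by simp
  qed
  moreover have "(\<Sum>j\<in>UNIV. a$j * x$j) = 0" if "x \<in> D" for x
  proof -
    have "(of_int (\<Sum>j\<in>UNIV. a$j * x$j) :: rat) = of_int N * (\<Sum>j\<in>UNIV. of_int (x$j) * ar$j)"
      by (simp add: a sum_distrib_left ac_simps)
    also have "\<dots> = 0" using arD[OF that] by simp
    finally have "(of_int (\<Sum>j\<in>UNIV. a$j * x$j) :: rat) = 0" .
    then show ?thesis by (simp only: of_int_eq_0_iff)
  qed
  ultimately show ?thesis by blast
qed



lemma ftp_span:
  fixes C :: "'a::finite \<Rightarrow> 'a \<Rightarrow> bool" and h :: "'a \<Rightarrow> 'a \<Rightarrow> int^'n"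
  assumes ftp: "ftp C h" and ne: "sft C \<noteq> {}"
  shows "span (vec_real ` Dset C h) = UNIV"
proof (rule ccontr)
  assume "\<not> ?thesis"
  then obtain a :: "int^'n" where a: "a \<noteq> 0" "\<forall>x\<in>Dset C h. (\<Sum>j\<in>UNIV. a$j * x$j) = 0"
    using int_functional by blast
  define f where "f x = (\<Sum>j\<in>UNIV. a$j * x$j)" for x :: "int^'n"
  have f_diff: "f (x - y) = f x - f y" for x y by (simp add: f_def algebra_simps sum_subtractf)
  have f_0: "f 0 = 0" by (simp add: f_def)
  have f_sum: "f (sum g S) = (\<Sum>i\<in>S. f (g i))" for g and S :: "nat set"
    unfolding f_def sum_component sum_distrib_left by (rule sum.swap)
  have f_scale: "f (c *s x) = c * f x" for c x by (simp add: f_def sum_distrib_left ac_simps)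
  have fL: "gen_subgroup (Dset C h) \<subseteq> {x. f x = 0}"
  proof (rule gen_sub_le)
    show "is_zsubgroup {x. f x = 0}" unfolding is_zsubgroup_def using f_0 f_diff by auto
    show "Dset C h \<subseteq> {x. f x = 0}" using a(2) unfolding f_def by auto
  qed
  define Fm where "Fm = (\<Sum>p\<in>UNIV. \<bar>f (h (fst p) (snd p))\<bar>)"
  have Fm0: "0 \<le> Fm" unfolding Fm_def by (intro sum_nonneg) auto
  have Fm_ge: "\<bar>f (h x y)\<bar> \<le> Fm" for x y
    unfolding Fm_def using member_le_sum[of "(x,y)" UNIV "\<lambda>p. \<bar>f (h (fst p) (snd p))\<bar>"] by simp
  have pb: "\<bar>f (pval h w m)\<bar> \<le> int m * Fm" for w m
  proof -
    have "\<bar>f (pval h w m)\<bar> = \<bar>\<Sum>i<m. f (h (w i) (w (Suc i)))\<bar>" unfolding pval_def f_sum ..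
    also have "\<dots> \<le> (\<Sum>i<m. \<bar>f (h (w i) (w (Suc i)))\<bar>)" by (rule sum_abs)
    also have "\<dots> \<le> (\<Sum>i<m. Fm)" by (rule sum_mono) (rule Fm_ge)
    finally show ?thesis by simp
  qed
  define K where "K = int CARD('a) * Fm"
  have K0: "0 \<le> K" unfolding K_def using Fm0 by simp
  have hb: "\<bar>f (hsum h s n)\<bar> \<le> K" if s: "s \<in> sft C" for s n
  proof -
    obtain l m w' where l: "l \<in> gen_subgroup (Dset C h)" "m < CARD('a)" "pval h (\<lambda>i. s (int i)) n = l + pval h w' m"
      using decomp[OF sft_path[OF s, of n], of h] by blast
    have "f (hsum h s n) = f (pval h w' m)"
      unfolding hsum_pval l(3) using fL l(1) f_diff[of "l + pval h w' m" "pval h w' m"] by auto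
    also have "\<bar>\<dots>\<bar> \<le> int m * Fm" by (rule pb)
    also have "\<dots> \<le> K" unfolding K_def using l(2) Fm0 by (intro mult_right_mono) auto
    finally show ?thesis .
  qed
  obtain j0 where j0: "a$j0 \<noteq> 0" using a(1) by (auto simp: vec_eq_iff)
  define p where "p = a$j0"
  define e0 :: "int^'n" where "e0 = axis j0 1"
  have fe0: "f e0 = p" unfolding f_def e0_def p_def
    by (simp add: axis_def if_distrib sum.delta sum.delta' cong: if_cong)
  define t where "t = (K+1) *s e0"
  have ft: "f t = (K+1) * p" unfolding t_def f_scale fe0 ..
  define N where "N = 2 * ((K+1) * \<bar>p\<bar>)"
  have KP: "(K+1) * \<bar>p\<bar> \<ge> K + 1" using j0 K0 unfolding p_def
    by (metis abs_ge_zero add_increasing2 mult.right_neutral mult_left_mono zero_less_abs_iff zero_le_one int_one_le_iff_zero_less)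
  have Npos: "N > 0" unfolding N_def using KP K0 by simp
  define \<Gamma> where "\<Gamma> = {x :: int^'n. \<forall>j. N dvd x$j}"
  have zg: "is_zsubgroup \<Gamma>" unfolding is_zsubgroup_def \<Gamma>_def by (auto simp: dvd_diff)
  have fi: "finite_index \<Gamma>" unfolding finite_index_def
  proof (intro exI conjI allI)
    show "finite ((\<lambda>g. \<chi> j. g j) ` (PiE UNIV (\<lambda>_. {0..<N})))"
      by (intro finite_imageI finite_PiE) auto
    fix x :: "int^'n"
    have "(\<lambda>j. x$j mod N) \<in> PiE UNIV (\<lambda>_. {0..<N})" using Npos by (auto simp: PiE_iff)
    moreover have "x - (\<chi> j. x$j mod N) \<in> \<Gamma>" unfolding \<Gamma>_def by (simp add: dvd_minus_mod)
    ultimately show "\<exists>f\<in>(\<lambda>g. \<chi> j. g j) ` (PiE UNIV (\<lambda>_. {0..<N})). x - f \<in> \<Gamma>" by blast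
  qed
  have so: "sft_open C (sft C)" unfolding sft_open_def by auto
  have "induced_transitive C h \<Gamma>" using ftp zg fi unfolding ftp_def by blast
  then obtain n s where s: "s \<in> sft C" "0 + hsum h s n - t \<in> \<Gamma>"
    unfolding induced_transitive_def using so ne by blast
  have "N dvd f (hsum h s n - t)"
    using s(2) unfolding \<Gamma>_def f_def by (auto intro!: dvd_sum dvd_mult)
  then have dz: "N dvd f (hsum h s n) - (K+1) * p" using f_diff ft by simp
  have fb: "\<bar>f (hsum h s n)\<bar> \<le> K" by (rule hb[OF s(1)])
  have ap: "\<bar>(K+1) * p\<bar> = (K+1) * \<bar>p\<bar>" using K0 by (simp add: abs_mult)
  have z1: "f (hsum h s n) - (K+1) * p \<noteq> 0"
  proof
    assume "f (hsum h s n) - (K+1) * p = 0"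
    then have "f (hsum h s n) = (K+1) * p" by simp
    then have "(K+1) * \<bar>p\<bar> \<le> K" using fb ap by simp
    then show False using KP by simp
  qed
  have z2: "\<bar>f (hsum h s n) - (K+1) * p\<bar> < N"
  proof -
    have "\<bar>f (hsum h s n) - (K+1) * p\<bar> \<le> \<bar>f (hsum h s n)\<bar> + \<bar>(K+1) * p\<bar>" by (rule abs_triangle_ineq4)
    then show ?thesis using fb ap KP unfolding N_def by linarith
  qed
  show False using dvd_imp_le_int[OF z1 dz] z2 Npos by simp
qed


theorem mainTheorem7:
  fixes C :: "'a::finite \<Rightarrow> 'a \<Rightarrow> bool"
    and h :: "'a \<Rightarrow> 'a \<Rightarrow> int^'n"
  assumes "transitive_sft C"
    and "0 \<in> rot_set C h"
  shows "(aff_dim (rot_set C h) = int CARD('n) \<longleftrightarrow> zrank (gen_subgroup (Dset C h)) = CARD('n))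
       \<and> (ftp C h \<longrightarrow> aff_dim (rot_set C h) = int CARD('n))"
proof -
  define R where "R = rot_set C h"
  define Dv where "Dv = vec_real ` Dset C h"
  have RD: "R \<subseteq> span Dv" using rot_sub_span unfolding R_def Dv_def .
  have DR: "Dv \<subseteq> span R"
  proof
    fix y assume "y \<in> Dv"
    then obtain p n where pn: "y = vec_real (hsum h p n)" "p \<in> sft C" "n > 0" "(shift^^n) p = p"
      unfolding Dv_def Dset_def by blast
    have "(1 / real n) *\<^sub>R vec_real (hsum h p n) \<in> R" unfolding R_def by (rule rot_periodic[OF pn(2-4)])
    then have "real n *\<^sub>R ((1 / real n) *\<^sub>R vec_real (hsum h p n)) \<in> span R" by (intro span_scale span_base)
    then show "y \<in> span R" using pn(1,3) by simp
  qed
  have spaneq: "span R = span Dv" using RD DR by (metis span_mono span_span subset_antisym)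
  have aff: "aff_dim R = int (dim R)" using assms(2) unfolding R_def by (intro aff_dim_zero) (simp add: hull_inc)
  have dimiff: "aff_dim R = int CARD('n) \<longleftrightarrow> span Dv = UNIV"
    using aff dim_eq_full[of R] spaneq by simp
  have ne: "sft C \<noteq> {}" using assms(2) unfolding rot_set_def by auto
  show ?thesis
    using dimiff span_iff_zrank[of "Dset C h"] ftp_span[OF _ ne] unfolding R_def Dv_def by auto
qed

end
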